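(* Let $c\in\mathbb R$ and let $\mu\ge0$ be a $C^2$ solution of $-c\partial_\xi\mu=\theta\partial_{\xi\xi}\mu+\alpha\partial_{\theta\theta}\mu+r\mu(1-\nu)$ on $\mathbb R\times\Theta$ with $\partial_\theta\mu(\xi,\theta_{\min})=\partial_\theta\mu(\xi,\theta_{\max})=0$, such that $\nu$ is locally bounded. Then for every $0<b<\infty$ there exists $C(b)<\infty$ such that $$\mu(\xi,\theta)\le C(b)\,\mu(\xi,\theta')\quad\text{for all }(\xi,\theta,\theta')\in(-b,b)\times\Theta\times\Theta.$$
   Context: $\Theta=(\theta_{\min},\theta_{\max})$, $0<\theta_{\min}<\theta_{\max}<\infty$, $\alpha,r>0$; $\nu(\xi)=\int_\Theta\mu(\xi,\theta)d\theta$. *)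

theory Defs
  imports "HOL-Analysis.Analysis"
begin

text \<open>A function f is C^2 on S with
  first derivative Df and second derivative D2f (Frechet derivatives, taken
  within S, so one-sided at boundary points of S), the second derivative being
  continuous on S.\<close>
definition C2_on_with ::
  "(real \<times> real) set \<Rightarrow> (real \<times> real \<Rightarrow> real)
   \<Rightarrow> (real \<times> real \<Rightarrow> ((real \<times> real) \<Rightarrow>\<^sub>L real))
   \<Rightarrow> (real \<times> real \<Rightarrow> ((real \<times> real) \<Rightarrow>\<^sub>L ((real \<times> real) \<Rightarrow>\<^sub>L real))) \<Rightarrow> bool" where
  "C2_on_with S f Df D2f \<longleftrightarrow>
     (\<forall>z\<in>S. (f has_derivative blinfun_apply (Df z)) (at z within S)) \<and>
     (\<forall>z\<in>S. (Df has_derivative blinfun_apply (D2f z)) (at z within S)) \<and>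
     continuous_on S D2f"

definition nu :: "real \<Rightarrow> real \<Rightarrow> (real \<times> real \<Rightarrow> real) \<Rightarrow> real \<Rightarrow> real" where
  "nu tmin tmax \<mu> \<xi> = integral {tmin..tmax} (\<lambda>\<theta>. \<mu> (\<xi>, \<theta>))"

end

theory Submission imports Defs begin

lemma line_deriv:
  fixes f :: "real \<times> real \<Rightarrow> 'b::real_normed_vector" and F :: "(real \<times> real) \<Rightarrow>\<^sub>L 'b"
  assumes f: "(f has_derivative blinfun_apply F) (at (g t) within S)"
    and g: "(g has_derivative (\<lambda>h. h *\<^sub>R e)) (at t within T)"
    and sub: "g ` T \<subseteq> S"
  shows "((\<lambda>s. f (g s)) has_derivative (\<lambda>h. h *\<^sub>R blinfun_apply F e)) (at t within T)"
proof -
  have f2: "(f has_derivative blinfun_apply F) (at (g t) within g ` T)"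
    using f sub by (rule has_derivative_subset)
  have "((f \<circ> g) has_derivative (blinfun_apply F \<circ> (\<lambda>h. h *\<^sub>R e))) (at t within T)"
    by (rule diff_chain_within[OF g f2])
  then show ?thesis by (simp add: comp_def blinfun.scaleR_right)
qed

lemma line_deriv_real:
  fixes f :: "real \<times> real \<Rightarrow> real" and F :: "(real \<times> real) \<Rightarrow>\<^sub>L real"
  assumes f: "(f has_derivative blinfun_apply F) (at (g t) within S)"
    and g: "(g has_derivative (\<lambda>h. h *\<^sub>R e)) (at t within T)"
    and sub: "g ` T \<subseteq> S"
  shows "((\<lambda>s. f (g s)) has_real_derivative (blinfun_apply F e)) (at t within T)"
proof -
  have e: "(\<lambda>h. h *\<^sub>R blinfun_apply F e) = (*) (blinfun_apply F e)" by (auto simp: fun_eq_iff)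
  show ?thesis using line_deriv[OF f g sub] unfolding e has_field_derivative_def .
qed

lemma line_deriv2:
  fixes Df :: "real \<times> real \<Rightarrow> (real \<times> real) \<Rightarrow>\<^sub>L real" and F :: "(real \<times> real) \<Rightarrow>\<^sub>L ((real \<times> real) \<Rightarrow>\<^sub>L real)"
  assumes f: "(Df has_derivative blinfun_apply F) (at (g t) within S)"
    and g: "(g has_derivative (\<lambda>h. h *\<^sub>R e)) (at t within T)"
    and sub: "g ` T \<subseteq> S"
  shows "((\<lambda>s. blinfun_apply (Df (g s)) e) has_real_derivative (blinfun_apply (blinfun_apply F e) e)) (at t within T)"
proof -
  have "((\<lambda>s. Df (g s)) has_derivative (\<lambda>h. h *\<^sub>R blinfun_apply F e)) (at t within T)"
    by (rule line_deriv[OF f g sub])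
  then have "((\<lambda>s. blinfun_apply (Df (g s)) e) has_derivative (\<lambda>h. blinfun_apply (h *\<^sub>R blinfun_apply F e) e)) (at t within T)"
    by (rule bounded_linear.has_derivative[OF blinfun.bounded_linear_left])
  moreover have "(\<lambda>h. blinfun_apply (h *\<^sub>R blinfun_apply F e) e) = (*) (blinfun_apply (blinfun_apply F e) e)"
    by (auto simp: fun_eq_iff blinfun.scaleR_left)
  ultimately show ?thesis by (simp add: has_field_derivative_def)
qed

lemma second_deriv_min:
  fixes \<phi> \<phi>' :: "real \<Rightarrow> real"
  assumes "\<eta> > 0" and mn: "\<And>t. \<bar>t\<bar> < \<eta> \<Longrightarrow> \<phi> 0 \<le> \<phi> t"
    and d1: "\<And>t. \<bar>t\<bar> < \<eta> \<Longrightarrow> (\<phi> has_real_derivative \<phi>' t) (at t)"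
    and d2: "(\<phi>' has_real_derivative a) (at 0)"
  shows "\<phi>' 0 = 0 \<and> a \<ge> 0"
proof -
  have z: "\<phi>' 0 = 0"
    using DERIV_local_min[OF d1[of 0] \<open>\<eta>>0\<close>] mn assms(1) by auto
  moreover have "a \<ge> 0"
  proof (rule ccontr)
    assume "\<not> a \<ge> 0" then have "a < 0" by simp
    from DERIV_neg_dec_right[OF d2 this] obtain d where d: "d > 0" "\<And>h. h > 0 \<Longrightarrow> h < d \<Longrightarrow> \<phi>' h < 0"
      using z by auto
    define t where "t = min d \<eta> / 2"
    have t: "t > 0" "t < d" "t < \<eta>" using d \<open>\<eta>>0\<close> by (auto simp: t_def)
    have "\<And>x. 0 \<le> x \<Longrightarrow> x \<le> t \<Longrightarrow> (\<phi> has_real_derivative \<phi>' x) (at x)"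
      using d1 t by auto
    from MVT2[OF t(1) this] obtain z where "0 < z" "z < t" "\<phi> t - \<phi> 0 = (t - 0) * \<phi>' z" by blast
    moreover have "\<phi>' z < 0" using d(2)[of z] \<open>0<z\<close> \<open>z<t\<close> t by auto
    ultimately have "\<phi> t < \<phi> 0" using t mult_pos_neg[of t "\<phi>' z"] by simp
    with mn[of t] t show False by auto
  qed
  ultimately show ?thesis by simp
qed

lemma gx: "((\<lambda>t. d*(exp(-l*((x+t-a)^2+b)) - E)) has_real_derivative (d*exp(-l*((x+t-a)^2+b))*(-2*l*(x+t-a)))) (at t within T)"
  by (auto intro!: derivative_eq_intros simp: algebra_simps power2_eq_square)

lemma gx2: "((\<lambda>t. d*exp(-l*((x+t-a)^2+b))*(-2*l*(x+t-a))) has_real_derivative (d*exp(-l*((x+t-a)^2+b))*(4*l^2*(x+t-a)^2-2*l))) (at t within T)"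
  by (auto intro!: derivative_eq_intros simp: algebra_simps power2_eq_square)

lemma gy: "((\<lambda>t. d*(exp(-l*(b+(y+t-a)^2)) - E)) has_real_derivative (d*exp(-l*(b+(y+t-a)^2))*(-2*l*(y+t-a)))) (at t within T)"
  by (auto intro!: derivative_eq_intros simp: algebra_simps power2_eq_square)

lemma gy2: "((\<lambda>t. d*exp(-l*(b+(y+t-a)^2))*(-2*l*(y+t-a))) has_real_derivative (d*exp(-l*(b+(y+t-a)^2))*(4*l^2*(y+t-a)^2-2*l))) (at t within T)"
  by (auto intro!: derivative_eq_intros simp: algebra_simps power2_eq_square)

lemma gym: "((\<lambda>t. d*(exp(-l*(b+(y-t-a)^2)) - E)) has_real_derivative (d*exp(-l*(b+(y-t-a)^2))*(2*l*(y-t-a)))) (at t within T)"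
  by (auto intro!: derivative_eq_intros simp: algebra_simps power2_eq_square)

lemma barrier_pos:
  fixes tmin tmax \<alpha> c K \<rho> R l X Y y :: real
  assumes "0 < tmin" "tmin \<le> y" "y \<le> tmax" "0 < \<alpha>" "0 \<le> K" "0 < \<rho>"
    and "\<rho>^2 \<le> X^2 + Y^2" "\<bar>X\<bar> \<le> R"
    and l: "l = max 1 ((2*(tmax + \<alpha> + \<bar>c\<bar>*R) + K) / (min tmin \<alpha> * \<rho>^2))"
  shows "y*(4*l^2*X^2-2*l) + \<alpha>*(4*l^2*Y^2-2*l) + c*(-2*l*X) - K > 0"
proof -
  define a where "a = min tmin \<alpha>"
  define Tt where "Tt = tmax + \<alpha> + \<bar>c\<bar>*R"
  have a: "a > 0" "a \<le> y" "a \<le> \<alpha>" using assms by (auto simp: a_def)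
  have R: "R \<ge> 0" using assms(8) by simp
  have Tt: "Tt > 0" unfolding Tt_def using assms R by (simp add: add_pos_nonneg)
  have l1: "l \<ge> 1" and l2: "l \<ge> (2*Tt+K)/(a*\<rho>^2)" using l by (auto simp: a_def Tt_def)
  have ar: "a*\<rho>^2 > 0" using a assms by simp
  have l3: "a*\<rho>^2*l \<ge> 2*Tt+K" using l2 ar by (simp add: field_simps)
  have lp: "l > 0" using l1 by simp
  have s1: "y*(4*l^2*X^2) \<ge> a*(4*l^2*X^2)" by (rule mult_right_mono) (use a in auto)
  have s2: "\<alpha>*(4*l^2*Y^2) \<ge> a*(4*l^2*Y^2)" by (rule mult_right_mono) (use a in auto)
  have s3: "a*(4*l^2*X^2) + a*(4*l^2*Y^2) \<ge> 4*l*(a*\<rho>^2*l)"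
  proof -
    have "a*(4*l^2*X^2) + a*(4*l^2*Y^2) = 4*l^2*a*(X^2+Y^2)" by (simp add: algebra_simps)
    also have "\<dots> \<ge> 4*l^2*a*\<rho>^2" using assms(7) a by (intro mult_left_mono) auto
    finally show ?thesis by (simp add: power2_eq_square algebra_simps)
  qed
  have s4: "4*l*(a*\<rho>^2*l) \<ge> 4*l*(2*Tt+K)" using l3 lp by (intro mult_left_mono) auto
  have s5: "c*(-2*l*X) \<ge> -2*l*(\<bar>c\<bar>*R)"
  proof -
    have "\<bar>c*X\<bar> \<le> \<bar>c\<bar>*R" using assms(8) by (simp add: abs_mult mult_left_mono)
    then have "c*X \<le> \<bar>c\<bar>*R" by simp
    then show ?thesis using lp by (simp add: algebra_simps mult_left_mono)
  qed
  have s6: "y*(2*l) \<le> tmax*(2*l)" using assms lp by (intro mult_right_mono) auto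
  have s7: "4*l*K \<ge> K" using mult_right_mono[of 1 "4*l" K] l1 assms(5) by simp
  have s8: "8*l*Tt > 2*l*Tt" using lp Tt by simp
  show ?thesis using s1 s2 s3 s4 s5 s6 s7 s8 unfolding Tt_def by (simp add: algebra_simps)
qed

lemma spread:
  fixes tmin tmax \<alpha> r c :: real
    and \<mu> :: "real \<times> real \<Rightarrow> real"
    and D\<mu> :: "real \<times> real \<Rightarrow> ((real \<times> real) \<Rightarrow>\<^sub>L real)"
    and D2\<mu> :: "real \<times> real \<Rightarrow> ((real \<times> real) \<Rightarrow>\<^sub>L ((real \<times> real) \<Rightarrow>\<^sub>L real))"
  assumes tmin: "0 < tmin" and tt: "tmin < tmax" and alpha: "0 < \<alpha>" and rpos: "0 < r"
    and C2: "C2_on_with (UNIV \<times> {tmin..tmax}) \<mu> D\<mu> D2\<mu>"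
    and nonneg: "\<And>\<xi> \<theta>. \<theta> \<in> {tmin..tmax} \<Longrightarrow> 0 \<le> \<mu> (\<xi>, \<theta>)"
    and eq: "\<And>\<xi> \<theta>. \<theta> \<in> {tmin<..<tmax} \<Longrightarrow>
        - c * D\<mu> (\<xi>, \<theta>) (1, 0)
          = \<theta> * D2\<mu> (\<xi>, \<theta>) (1, 0) (1, 0) + \<alpha> * D2\<mu> (\<xi>, \<theta>) (0, 1) (0, 1)
            + r * \<mu> (\<xi>, \<theta>) * (1 - nu tmin tmax \<mu> \<xi>)"
    and bc_min: "\<And>\<xi>. D\<mu> (\<xi>, tmin) (0, 1) = 0"
    and bc_max: "\<And>\<xi>. D\<mu> (\<xi>, tmax) (0, 1) = 0"
    and loc_bdd: "\<And>K. compact K \<Longrightarrow> bounded (nu tmin tmax \<mu> ` K)"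
    and th1: "tmin < \<theta>1" "\<theta>1 < tmax" and pos1: "\<mu> (\<xi>1, \<theta>1) > 0"
  shows "\<forall>z \<in> UNIV \<times> {tmin..tmax}. \<mu> z > 0"
proof -
  define S where "S = (UNIV::real set) \<times> {tmin..tmax}"
  have dmu: "\<And>z. z \<in> S \<Longrightarrow> (\<mu> has_derivative blinfun_apply (D\<mu> z)) (at z within S)"
   and d2mu: "\<And>z. z \<in> S \<Longrightarrow> (D\<mu> has_derivative blinfun_apply (D2\<mu> z)) (at z within S)"
    using C2 unfolding C2_on_with_def S_def by auto
  have intS: "interior S = UNIV \<times> {tmin<..<tmax}" by (simp add: S_def interior_Times)
  have dmu_at: "(\<mu> has_derivative blinfun_apply (D\<mu> (x,y))) (at (x,y) within UNIV)"
    and d2mu_at: "(D\<mu> has_derivative blinfun_apply (D2\<mu> (x,y))) (at (x,y) within UNIV)"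
    if "tmin < y" "y < tmax" for x y
  proof -
    have i: "(x,y) \<in> interior S" using that intS by simp
    have s: "(x,y) \<in> S" using interior_subset i by blast
    show "(\<mu> has_derivative blinfun_apply (D\<mu> (x,y))) (at (x,y) within UNIV)"
      using dmu[OF s] at_within_interior[OF i] by simp
    show "(D\<mu> has_derivative blinfun_apply (D2\<mu> (x,y))) (at (x,y) within UNIV)"
      using d2mu[OF s] at_within_interior[OF i] by simp
  qed
  have cont: "continuous_on S \<mu>"
    using dmu has_derivative_continuous continuous_on_eq_continuous_within by blast
  define q where "q z = (fst z - \<xi>1)^2 + (snd z - \<theta>1)^2" for z
  have distq: "dist z (\<xi>1,\<theta>1) = sqrt (q z)" for z
    by (cases z) (simp add: q_def dist_Pair_Pair dist_real_def)
  have z1S: "(\<xi>1,\<theta>1) \<in> S" using th1 by (simp add: S_def)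
  obtain d where d: "d > 0" "\<And>z. z \<in> S \<Longrightarrow> dist z (\<xi>1,\<theta>1) < d \<Longrightarrow> dist (\<mu> z) (\<mu> (\<xi>1,\<theta>1)) < \<mu> (\<xi>1,\<theta>1)/2"
    using cont[unfolded continuous_on_iff] z1S pos1 by (meson half_gt_zero)
  define \<rho> where "\<rho> = d/2"
  define \<delta> where "\<delta> = \<mu> (\<xi>1,\<theta>1)/2"
  have rho: "\<rho> > 0" and delta: "\<delta> > 0" using d pos1 by (auto simp: \<rho>_def \<delta>_def)
  have near: "\<delta> \<le> \<mu> z" if "z \<in> S" "q z \<le> \<rho>^2" for z
  proof -
    have "sqrt (q z) \<le> sqrt (\<rho>^2)" using that by (intro real_sqrt_le_mono) auto
    then have "dist z (\<xi>1,\<theta>1) < d" using distq rho by (simp add: \<rho>_def)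
    from d(2)[OF that(1) this] show ?thesis by (simp add: \<delta>_def dist_real_def abs_if split: if_splits)
  qed
  show ?thesis unfolding S_def[symmetric]
  proof
    fix z0 assume z0S: "z0 \<in> S"
    show "\<mu> z0 > 0"
    proof (cases "q z0 \<le> \<rho>^2")
      case True then show ?thesis using near[OF z0S] delta by fastforce
    next
      case False
      then have qz0: "\<rho>^2 < q z0" by simp
      have q0: "q z \<ge> 0" for z by (simp add: q_def)
      define R where "R = sqrt (q z0) + 1"
      have Rpos: "R > 0" using q0 by (simp add: R_def add_nonneg_pos)
      have qR: "q z0 < R^2"
      proof -
        have "sqrt (q z0) < R" by (simp add: R_def)
        then have "sqrt (q z0) ^2 < R^2" using q0 by (intro power_strict_mono) auto
        then show ?thesis using q0 by simp
      qed
      have Xb: "\<bar>fst z - \<xi>1\<bar> \<le> R" if "q z \<le> R^2" for z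
      proof -
        have "(fst z - \<xi>1)^2 \<le> R^2" using that zero_le_power2[of "snd z - \<theta>1"] unfolding q_def by linarith
        then have "sqrt ((fst z - \<xi>1)^2) \<le> sqrt (R^2)" by (rule real_sqrt_le_mono)
        then show ?thesis using Rpos by simp
      qed
      obtain B0 where B0: "\<And>\<xi>. \<xi> \<in> {\<xi>1-R..\<xi>1+R} \<Longrightarrow> \<bar>nu tmin tmax \<mu> \<xi>\<bar> \<le> B0"
        using loc_bdd[of "{\<xi>1-R..\<xi>1+R}"] unfolding bounded_iff by (auto simp del: atLeastAtMost_iff)
      define B where "B = max B0 0"
      define K where "K = r * B"
      have K0: "K \<ge> 0" using rpos by (simp add: K_def B_def)
      have nuB: "nu tmin tmax \<mu> \<xi> \<le> B" if "\<xi> \<in> {\<xi>1-R..\<xi>1+R}" for \<xi>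
        using B0[OF that] by (simp add: B_def)
      define l where "l = max 1 ((2*(tmax + \<alpha> + \<bar>c\<bar>*R) + K) / (min tmin \<alpha> * \<rho>^2))"
      have lpos: "l > 0" by (simp add: l_def)
      define E where "E = exp (-l*R^2)"
      have Epos: "E > 0" by (simp add: E_def)
      define w where "w z = \<delta> * (exp (-l * q z) - E)" for z
      define v where "v z = \<mu> z - w z" for z
      define A where "A = {z \<in> S. \<rho>^2 \<le> q z \<and> q z \<le> R^2}"
      have qcont: "continuous_on X q" for X unfolding q_def by (intro continuous_intros)
      have A_eq: "A = ({\<xi>1-R..\<xi>1+R} \<times> {tmin..tmax}) \<inter> {z. \<rho>^2 \<le> q z \<and> q z \<le> R^2}"
        unfolding A_def S_def using Xb by (force simp: abs_le_iff)
      have "closed {z. \<rho>^2 \<le> q z \<and> q z \<le> R^2}"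
        unfolding q_def by (intro closed_Collect_conj closed_Collect_le continuous_intros)
      then have compA: "compact A" unfolding A_eq by (intro compact_Int_closed compact_Times) auto
      have z0A: "z0 \<in> A" using z0S qz0 qR by (simp add: A_def)
      have contv: "continuous_on A v"
        unfolding v_def w_def
        by (intro continuous_intros continuous_on_subset[OF cont] continuous_on_compose2[OF continuous_on_exp qcont]) 
           (auto simp: A_def)
      obtain p where pA: "p \<in> A" and pmin: "\<And>z. z \<in> A \<Longrightarrow> v p \<le> v z"
        using continuous_attains_inf[OF compA _ contv] z0A by blast
      have vp: "v p \<ge> 0"
      proof (rule ccontr)
        assume "\<not> v p \<ge> 0" then have vneg: "v p < 0" by simp
        obtain x y where p: "p = (x,y)" by (cases p)
        have yS: "tmin \<le> y" "y \<le> tmax" using pA by (auto simp: A_def S_def p)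
        define g where "g = exp (-l * q p)"
        have gpos: "g > 0" by (simp add: g_def)
        have g1: "g \<le> 1" using lpos q0[of p] by (simp add: g_def)
        have qp1: "\<rho>^2 < q p"
        proof (rule ccontr)
          assume "\<not> \<rho>^2 < q p"
          then have "\<delta> \<le> \<mu> p" using near pA by (auto simp: A_def)
          moreover have "w p < \<delta>"
          proof -
            have "w p = \<delta> * (g - E)" by (simp add: w_def g_def)
            also have "\<dots> < \<delta> * 1" using g1 Epos delta by (intro mult_strict_left_mono) auto
            finally show ?thesis by simp
          qed
          ultimately show False using vneg by (simp add: v_def)
        qed
        have qp2: "q p < R^2"
        proof (rule ccontr)
          assume "\<not> q p < R^2"
          then have "g \<le> E" using lpos by (simp add: g_def E_def)
          then have "w p \<le> 0" using delta unfolding w_def g_def by (intro mult_nonneg_nonpos) auto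
          moreover have "\<mu> p \<ge> 0" using nonneg yS by (simp add: p)
          ultimately show False using vneg by (simp add: v_def)
        qed
        have "open {z. \<rho>^2 < q z \<and> q z < R^2}"
          unfolding q_def by (intro open_Collect_conj open_Collect_less continuous_intros)
        then obtain \<eta> where eta: "\<eta> > 0" "ball p \<eta> \<subseteq> {z. \<rho>^2 < q z \<and> q z < R^2}"
          using qp1 qp2 open_contains_ball by blast
        have inA: "v p \<le> v (x', y')" if "dist (x',y') p < \<eta>" "tmin \<le> y'" "y' \<le> tmax" for x' y'
        proof -
          have "(x',y') \<in> A" using eta(2) that by (auto simp: A_def S_def dist_commute)
          then show ?thesis by (rule pmin)
        qed
        have XR: "x \<in> {\<xi>1-R..\<xi>1+R}" using Xb[of p] qp2 by (simp add: p abs_le_iff)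
        have wp: "w (x', y') = \<delta> * (exp (-l * ((x'-\<xi>1)^2 + (y'-\<theta>1)^2)) - E)" for x' y'
          by (simp add: w_def q_def)
        have gdef: "g = exp (-l * ((x-\<xi>1)^2 + (y-\<theta>1)^2))" by (simp add: g_def q_def p)
        consider "y = tmin" | "y = tmax" | "tmin < y \<and> y < tmax" using yS by linarith
        then show False
        proof cases
          case 1
          define T where "T = {0..tmax-tmin}"
          define \<psi> where "\<psi> t = \<mu> (x, tmin + t) - \<delta> * (exp (-l * ((x-\<xi>1)^2 + (tmin+t-\<theta>1)^2)) - E)" for t
          have gder: "((\<lambda>s. (x, tmin+s)) has_derivative (\<lambda>h. h *\<^sub>R (0::real,1::real))) (at 0 within T)"
            by (auto intro!: derivative_eq_intros simp: fun_eq_iff)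
          have sub: "(\<lambda>s. (x, tmin+s)) ` T \<subseteq> S" by (auto simp: T_def S_def)
          have pS: "(x, tmin + 0) \<in> S" using tt by (simp add: S_def)
          have d1: "((\<lambda>t. \<mu> (x, tmin + t)) has_real_derivative D\<mu> (x,tmin) (0,1)) (at 0 within T)"
            using line_deriv_real[of \<mu> "D\<mu> (x, tmin)" "\<lambda>s. (x, tmin+s)" 0 S, OF _ gder sub] dmu[OF pS] by simp
          have d2: "((\<lambda>t. \<delta> * (exp (-l * ((x-\<xi>1)^2 + (tmin+t-\<theta>1)^2)) - E)) has_real_derivative
               \<delta>*exp(-l*((x-\<xi>1)^2+(tmin+0-\<theta>1)^2))*(-2*l*(tmin+0-\<theta>1))) (at 0 within T)"
            by (rule gy)
          have "(\<psi> has_real_derivative (0 - \<delta>*g*(-2*l*(tmin-\<theta>1)))) (at 0 within T)"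
            unfolding \<psi>_def using DERIV_diff[OF d1 d2] bc_min[of x] by (simp add: gdef 1)
          moreover have "0 - \<delta>*g*(-2*l*(tmin-\<theta>1)) < 0"
          proof -
            have "\<delta>*g*(2*l*(\<theta>1-tmin)) > 0" using delta gpos lpos th1 by simp
            then show ?thesis by (simp add: algebra_simps)
          qed
          ultimately obtain dd where dd: "dd > 0" "\<And>h. h > 0 \<Longrightarrow> 0 + h \<in> T \<Longrightarrow> h < dd \<Longrightarrow> \<psi> 0 > \<psi> (0 + h)"
            using has_real_derivative_neg_dec_right by blast
          define h where "h = min dd (min \<eta> (tmax - tmin)) / 2"
          have h: "h > 0" "h < dd" "h < \<eta>" "h < tmax - tmin" using dd eta tt by (auto simp: h_def)
          have "\<psi> 0 > \<psi> h" using dd(2)[of h] h by (simp add: T_def)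
          moreover have "v p \<le> v (x, tmin + h)"
            by (rule inA) (use h p 1 in \<open>auto simp: dist_Pair_Pair dist_real_def\<close>)
          ultimately show False by (simp add: \<psi>_def v_def wp p 1)
        next
          case 2
          define T where "T = {0..tmax-tmin}"
          define \<psi> where "\<psi> t = \<mu> (x, tmax - t) - \<delta> * (exp (-l * ((x-\<xi>1)^2 + (tmax-t-\<theta>1)^2)) - E)" for t
          have gder: "((\<lambda>s. (x, tmax-s)) has_derivative (\<lambda>h. h *\<^sub>R (0::real,-1::real))) (at 0 within T)"
            by (auto intro!: derivative_eq_intros simp: fun_eq_iff)
          have sub: "(\<lambda>s. (x, tmax-s)) ` T \<subseteq> S" by (auto simp: T_def S_def)
          have pS: "(x, tmax - 0) \<in> S" using tt by (simp add: S_def)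
          have m1: "D\<mu> (x,tmax) (0,-1) = 0"
          proof -
            have "(0::real,-1::real) = (-1) *\<^sub>R (0,1)" by simp
            then show ?thesis using bc_max[of x] by (metis blinfun.scaleR_right scale_zero_right)
          qed
          have d1: "((\<lambda>t. \<mu> (x, tmax - t)) has_real_derivative D\<mu> (x,tmax) (0,-1)) (at 0 within T)"
            using line_deriv_real[of \<mu> "D\<mu> (x, tmax)" "\<lambda>s. (x, tmax-s)" 0 S, OF _ gder sub] dmu[OF pS] by simp
          have d2: "((\<lambda>t. \<delta> * (exp (-l * ((x-\<xi>1)^2 + (tmax-t-\<theta>1)^2)) - E)) has_real_derivative
               \<delta>*exp(-l*((x-\<xi>1)^2+(tmax-0-\<theta>1)^2))*(2*l*(tmax-0-\<theta>1))) (at 0 within T)"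
            by (rule gym)
          have "(\<psi> has_real_derivative (0 - \<delta>*g*(2*l*(tmax-\<theta>1)))) (at 0 within T)"
            unfolding \<psi>_def using DERIV_diff[OF d1 d2] m1 by (simp add: gdef 2)
          moreover have "0 - \<delta>*g*(2*l*(tmax-\<theta>1)) < 0"
          proof -
            have "\<delta>*g*(2*l*(tmax-\<theta>1)) > 0" using delta gpos lpos th1 by simp
            then show ?thesis by (simp add: algebra_simps)
          qed
          ultimately obtain dd where dd: "dd > 0" "\<And>h. h > 0 \<Longrightarrow> 0 + h \<in> T \<Longrightarrow> h < dd \<Longrightarrow> \<psi> 0 > \<psi> (0 + h)"
            using has_real_derivative_neg_dec_right by blast
          define h where "h = min dd (min \<eta> (tmax - tmin)) / 2"
          have h: "h > 0" "h < dd" "h < \<eta>" "h < tmax - tmin" using dd eta tt by (auto simp: h_def)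
          have "\<psi> 0 > \<psi> h" using dd(2)[of h] h by (simp add: T_def)
          moreover have "v p \<le> v (x, tmax - h)"
            by (rule inA) (use h p 2 in \<open>auto simp: dist_Pair_Pair dist_real_def\<close>)
          ultimately show False by (simp add: \<psi>_def v_def wp p 2)
        next
          case 3
          define \<eta>' where "\<eta>' = min \<eta> (min (y - tmin) (tmax - y))"
          have eta': "\<eta>' > 0" "\<eta>' \<le> \<eta>" "\<eta>' \<le> y - tmin" "\<eta>' \<le> tmax - y" using eta 3 by (auto simp: \<eta>'_def)
          define X where "X = x - \<xi>1"
          define Y where "Y = y - \<theta>1"
          define \<phi>1 where "\<phi>1 t = \<mu> (x+t, y) - \<delta> * (exp (-l * ((x+t-\<xi>1)^2 + (y-\<theta>1)^2)) - E)" for t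
          define \<phi>1' where "\<phi>1' t = D\<mu> (x+t, y) (1,0) - \<delta>*exp(-l*((x+t-\<xi>1)^2+(y-\<theta>1)^2))*(-2*l*(x+t-\<xi>1))" for t
          have gx1: "((\<lambda>s. (x+s, y)) has_derivative (\<lambda>h. h *\<^sub>R (1::real,0::real))) (at t within UNIV)" for t
            by (auto intro!: derivative_eq_intros simp: fun_eq_iff)
          have hx: "\<phi>1' 0 = 0 \<and> D2\<mu> (x,y) (1,0) (1,0) - \<delta>*g*(4*l^2*X^2-2*l) \<ge> 0"
          proof -
            have r: "\<phi>1' 0 = 0 \<and> D2\<mu> (x+0,y) (1,0) (1,0) - \<delta>*exp(-l*((x+0-\<xi>1)^2+(y-\<theta>1)^2))*(4*l^2*(x+0-\<xi>1)^2-2*l) \<ge> 0"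
            proof (rule second_deriv_min[of \<eta>' \<phi>1 \<phi>1'])
              show "\<eta>' > 0" by (rule eta')
              show "\<phi>1 0 \<le> \<phi>1 t" if "\<bar>t\<bar> < \<eta>'" for t
              proof -
                have "v p \<le> v (x+t, y)"
                  by (rule inA) (use that eta' yS in \<open>auto simp: p dist_Pair_Pair dist_real_def\<close>)
                then show ?thesis by (simp add: \<phi>1_def v_def wp p)
              qed
              show "(\<phi>1 has_real_derivative \<phi>1' t) (at t)" if "\<bar>t\<bar> < \<eta>'" for t
                unfolding \<phi>1_def \<phi>1'_def
                by (rule DERIV_diff[OF line_deriv_real[OF dmu_at[OF 3[THEN conjunct1] 3[THEN conjunct2]] gx1, simplified] gx]) 
              show "(\<phi>1' has_real_derivative (D2\<mu> (x+0,y) (1,0) (1,0) - \<delta>*exp(-l*((x+0-\<xi>1)^2+(y-\<theta>1)^2))*(4*l^2*(x+0-\<xi>1)^2-2*l))) (at 0)"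
                unfolding \<phi>1'_def
                by (rule DERIV_diff[OF line_deriv2[OF d2mu_at[OF 3[THEN conjunct1] 3[THEN conjunct2]] gx1, simplified] gx2]) 
            qed
            then show ?thesis by (simp add: gdef X_def)
          qed
          define \<phi>2 where "\<phi>2 t = \<mu> (x, y+t) - \<delta> * (exp (-l * ((x-\<xi>1)^2 + (y+t-\<theta>1)^2)) - E)" for t
          define \<phi>2' where "\<phi>2' t = D\<mu> (x, y+t) (0,1) - \<delta>*exp(-l*((x-\<xi>1)^2+(y+t-\<theta>1)^2))*(-2*l*(y+t-\<theta>1))" for t
          have gy1: "((\<lambda>s. (x, y+s)) has_derivative (\<lambda>h. h *\<^sub>R (0::real,1::real))) (at t within UNIV)" for t
            by (auto intro!: derivative_eq_intros simp: fun_eq_iff)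
          have hy: "D2\<mu> (x,y) (0,1) (0,1) - \<delta>*g*(4*l^2*Y^2-2*l) \<ge> 0"
          proof -
            have r: "\<phi>2' 0 = 0 \<and> D2\<mu> (x,y+0) (0,1) (0,1) - \<delta>*exp(-l*((x-\<xi>1)^2+(y+0-\<theta>1)^2))*(4*l^2*(y+0-\<theta>1)^2-2*l) \<ge> 0"
            proof (rule second_deriv_min[of \<eta>' \<phi>2 \<phi>2'])
              show "\<eta>' > 0" by (rule eta')
              show "\<phi>2 0 \<le> \<phi>2 t" if "\<bar>t\<bar> < \<eta>'" for t
              proof -
                have "v p \<le> v (x, y+t)"
                  by (rule inA) (use that eta' yS in \<open>auto simp: p dist_Pair_Pair dist_real_def\<close>)
                then show ?thesis by (simp add: \<phi>2_def v_def wp p)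
              qed
              show "(\<phi>2 has_real_derivative \<phi>2' t) (at t)" if "\<bar>t\<bar> < \<eta>'" for t
              proof -
                have yt: "tmin < y + t" "y + t < tmax" using that eta' by auto
                show ?thesis unfolding \<phi>2_def \<phi>2'_def
                  by (rule DERIV_diff[OF line_deriv_real[OF dmu_at[OF yt] gy1, simplified] gy]) 
              qed
              show "(\<phi>2' has_real_derivative (D2\<mu> (x,y+0) (0,1) (0,1) - \<delta>*exp(-l*((x-\<xi>1)^2+(y+0-\<theta>1)^2))*(4*l^2*(y+0-\<theta>1)^2-2*l))) (at 0)"
              proof -
                have y0: "tmin < y + 0" "y + 0 < tmax" using 3 by auto
                show ?thesis unfolding \<phi>2'_def
                  by (rule DERIV_diff[OF line_deriv2[OF d2mu_at[OF y0] gy1[of 0] subset_UNIV] gy2])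
              qed
            qed
            then show ?thesis by (simp add: gdef Y_def)
          qed
          define Dx where "Dx = D\<mu> (x,y) (1,0)"
          define Dxx where "Dxx = D2\<mu> (x,y) (1,0) (1,0)"
          define Dyy where "Dyy = D2\<mu> (x,y) (0,1) (0,1)"
          define mp where "mp = \<mu> (x,y)"
          have Dx: "Dx = \<delta>*g*(-2*l*X)" using hx by (simp add: \<phi>1'_def Dx_def gdef X_def)
          have hx2: "Dxx \<ge> \<delta>*g*(4*l^2*X^2-2*l)" using hx by (simp add: Dxx_def)
          have hy2: "Dyy \<ge> \<delta>*g*(4*l^2*Y^2-2*l)" using hy by (simp add: Dyy_def)
          have eqp: "- c * Dx = y * Dxx + \<alpha> * Dyy + r * mp * (1 - nu tmin tmax \<mu> x)"
            using eq[of y x] 3 by (simp add: Dx_def Dxx_def Dyy_def mp_def)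
          have mp0: "mp \<ge> 0" using nonneg yS by (simp add: mp_def)
          have mpw: "mp < \<delta> * (g - E)" using vneg by (simp add: v_def w_def g_def p mp_def)
          have L: "y * Dxx + \<alpha> * Dyy + c * Dx \<le> K * mp"
          proof -
            have "r * mp * (nu tmin tmax \<mu> x - 1) \<le> r * mp * B"
              using nuB[OF XR] rpos mp0 by (intro mult_left_mono) auto
            then show ?thesis using eqp by (simp add: K_def algebra_simps)
          qed
          have G: "y * Dxx + \<alpha> * Dyy + c * Dx \<ge> y*(\<delta>*g*(4*l^2*X^2-2*l)) + \<alpha>*(\<delta>*g*(4*l^2*Y^2-2*l)) + c*(\<delta>*g*(-2*l*X))"
          proof -
            have "y*(\<delta>*g*(4*l^2*X^2-2*l)) \<le> y * Dxx" using hx2 yS tmin by (intro mult_left_mono) auto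
            moreover have "\<alpha>*(\<delta>*g*(4*l^2*Y^2-2*l)) \<le> \<alpha> * Dyy" using hy2 alpha by (intro mult_left_mono) auto
            ultimately show ?thesis by (simp add: Dx)
          qed
          have qpXY: "q p = X^2 + Y^2" by (simp add: q_def p X_def Y_def)
          have P: "y*(4*l^2*X^2-2*l) + \<alpha>*(4*l^2*Y^2-2*l) + c*(-2*l*X) - K > 0"
            by (rule barrier_pos[OF tmin yS alpha K0 rho _ _ l_def]) (use qp1 qpXY Xb[of p] qp2 in \<open>auto simp: p X_def\<close>)
          have dgP: "\<delta>*g*(y*(4*l^2*X^2-2*l) + \<alpha>*(4*l^2*Y^2-2*l) + c*(-2*l*X) - K) > 0"
            using P delta gpos by simp
          have id: "y*(\<delta>*g*(4*l^2*X^2-2*l)) + \<alpha>*(\<delta>*g*(4*l^2*Y^2-2*l)) + c*(\<delta>*g*(-2*l*X))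
              = \<delta>*g*(y*(4*l^2*X^2-2*l) + \<alpha>*(4*l^2*Y^2-2*l) + c*(-2*l*X) - K) + K*(\<delta>*g)"
            by (simp add: algebra_simps)
          have Km: "K * mp \<le> K * (\<delta>*g)"
          proof -
            have "K * mp \<le> K * (\<delta> * (g - E))" using mpw K0 by (intro mult_left_mono) auto
            also have "\<dots> \<le> K * (\<delta> * g)" using K0 delta Epos by (intro mult_left_mono) (auto simp: algebra_simps)
            finally show ?thesis .
          qed
          show False using L G id dgP Km by linarith
        qed
      qed
      have "w z0 > 0"
      proof -
        have "-l * R^2 < -l * q z0" using qR lpos by simp
        then show ?thesis using delta by (simp add: w_def E_def)
      qed
      then show ?thesis using pmin[OF z0A] vp by (simp add: v_def)
    qed
  qed
qed

theorem propositionA1: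
  fixes tmin tmax \<alpha> r c :: real
    and \<mu> :: "real \<times> real \<Rightarrow> real"
    and D\<mu> :: "real \<times> real \<Rightarrow> ((real \<times> real) \<Rightarrow>\<^sub>L real)"
    and D2\<mu> :: "real \<times> real \<Rightarrow> ((real \<times> real) \<Rightarrow>\<^sub>L ((real \<times> real) \<Rightarrow>\<^sub>L real))"
  assumes "0 < tmin" and "tmin < tmax" and "0 < \<alpha>" and "0 < r"
    and C2: "C2_on_with (UNIV \<times> {tmin..tmax}) \<mu> D\<mu> D2\<mu>"
    and nonneg: "\<And>\<xi> \<theta>. \<theta> \<in> {tmin..tmax} \<Longrightarrow> 0 \<le> \<mu> (\<xi>, \<theta>)"
    and eq: "\<And>\<xi> \<theta>. \<theta> \<in> {tmin<..<tmax} \<Longrightarrow>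
        - c * D\<mu> (\<xi>, \<theta>) (1, 0)
          = \<theta> * D2\<mu> (\<xi>, \<theta>) (1, 0) (1, 0) + \<alpha> * D2\<mu> (\<xi>, \<theta>) (0, 1) (0, 1)
            + r * \<mu> (\<xi>, \<theta>) * (1 - nu tmin tmax \<mu> \<xi>)"
    and bc_min: "\<And>\<xi>. D\<mu> (\<xi>, tmin) (0, 1) = 0"
    and bc_max: "\<And>\<xi>. D\<mu> (\<xi>, tmax) (0, 1) = 0"
    and loc_bdd: "\<And>K. compact K \<Longrightarrow> bounded (nu tmin tmax \<mu> ` K)"
  shows "\<forall>b>0. \<exists>C::real. \<forall>\<xi>\<in>{-b<..<b}. \<forall>\<theta>\<in>{tmin<..<tmax}. \<forall>\<theta>'\<in>{tmin<..<tmax}.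
           \<mu> (\<xi>, \<theta>) \<le> C * \<mu> (\<xi>, \<theta>')"
proof (intro allI impI)
  fix b :: real assume bpos: "b > 0"
  show "\<exists>C::real. \<forall>\<xi>\<in>{-b<..<b}. \<forall>\<theta>\<in>{tmin<..<tmax}. \<forall>\<theta>'\<in>{tmin<..<tmax}.
           \<mu> (\<xi>, \<theta>) \<le> C * \<mu> (\<xi>, \<theta>')"
  proof (cases "\<forall>\<xi> \<theta>. \<theta> \<in> {tmin<..<tmax} \<longrightarrow> \<mu> (\<xi>, \<theta>) = 0")
    case True
    then show ?thesis by (intro exI[of _ 0]) auto
  next
    case False
    then obtain \<xi>1 \<theta>1 where th: "tmin < \<theta>1" "\<theta>1 < tmax" and ne: "\<mu> (\<xi>1, \<theta>1) \<noteq> 0" by auto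
    have "\<mu> (\<xi>1, \<theta>1) > 0" using nonneg[of \<theta>1 \<xi>1] th ne by auto
    from spread[OF assms th this] have posS: "\<And>z. z \<in> UNIV \<times> {tmin..tmax} \<Longrightarrow> \<mu> z > 0" by blast
    define S where "S = (UNIV::real set) \<times> {tmin..tmax}"
    have cont: "continuous_on S \<mu>"
      using C2 unfolding C2_on_with_def S_def
      using has_derivative_continuous continuous_on_eq_continuous_within by blast
    define Q where "Q = {-b..b} \<times> {tmin..tmax}"
    have cQ: "compact Q" unfolding Q_def by (intro compact_Times) auto
    have nQ: "Q \<noteq> {}" using bpos \<open>tmin < tmax\<close> by (auto simp: Q_def)
    have cont': "continuous_on Q \<mu>" by (rule continuous_on_subset[OF cont]) (auto simp: Q_def S_def)
    obtain pm where pm: "pm \<in> Q" "\<And>z. z \<in> Q \<Longrightarrow> \<mu> pm \<le> \<mu> z"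
      using continuous_attains_inf[OF cQ nQ cont'] by blast
    obtain pM where pM: "pM \<in> Q" "\<And>z. z \<in> Q \<Longrightarrow> \<mu> z \<le> \<mu> pM"
      using continuous_attains_sup[OF cQ nQ cont'] by blast
    have mpos: "\<mu> pm > 0" using posS pm(1) by (auto simp: Q_def)
    have Mpos: "\<mu> pM > 0" using posS pM(1) by (auto simp: Q_def)
    show ?thesis
    proof (intro exI[of _ "\<mu> pM / \<mu> pm"] ballI)
      fix \<xi> \<theta> \<theta>' assume a: "\<xi> \<in> {-b<..<b}" "\<theta> \<in> {tmin<..<tmax}" "\<theta>' \<in> {tmin<..<tmax}"
      have q1: "(\<xi>, \<theta>) \<in> Q" "(\<xi>, \<theta>') \<in> Q" using a by (auto simp: Q_def)
      have "\<mu> (\<xi>, \<theta>) \<le> \<mu> pM" by (rule pM(2)[OF q1(1)])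
      also have "\<dots> = (\<mu> pM / \<mu> pm) * \<mu> pm" using mpos by simp
      also have "\<dots> \<le> (\<mu> pM / \<mu> pm) * \<mu> (\<xi>, \<theta>')"
        using pm(2)[OF q1(2)] mpos Mpos by (intro mult_left_mono) auto
      finally show "\<mu> (\<xi>, \<theta>) \<le> (\<mu> pM / \<mu> pm) * \<mu> (\<xi>, \<theta>')" .
    qed
  qed
qed

end
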